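(* Let $c>0$ and let $\vec{v}_1,\vec{v}_2\in\mathbb{R}^d$ be unit vectors. For $i=1,2$ let $h_{\vec{v}_i}$ be the strategic classifier that predicts $+1$ on a reported vector $\vec{x}$ iff $\vec{v}_i\cdot\vec{x}\ge 1/c$, where agents' true vectors $\vec{z}$ are drawn from the uniform distribution on the unit ball in $\mathbb{R}^d$ (with labels $y\in\{\pm1\}$ from an arbitrary joint distribution) and agents respond strategically to $h_{\vec{v}_i}$. Let $\mathrm{err}(h_{\vec{v}_i})$ be the probability that the prediction of $h_{\vec{v}_i}$ on the reported vector differs from the label $y$. Then $$|\mathrm{err}(h_{\vec{v}_1})-\mathrm{err}(h_{\vec{v}_2})|\le \frac{\theta(\vec{v}_1,\vec{v}_2)}{\pi}.$$
   Context: $\theta(\vec{v}_1,\vec{v}_2)=\arccos(\vec{v}_1\cdot\vec{v}_2)$. Strategic agent model: an agent with true vector $\vec{z}$ knows the rule, obtains value $1$ if classified positive and $0$ otherwise, pays $c\|\vec{x}-\vec{z}\|_2$ for reporting $\vec{x}$, and reports a utility-maximizing $\vec{x}$: if positive classification is attainable at cost at most $1$ it moves to the least costly positively classified point, otherwise it reports $\vec{x}=\vec{z}$. *)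

theory Defs
  imports "HOL-Probability.Probability"
begin

definition vangle :: "'a::real_inner \<Rightarrow> 'a \<Rightarrow> real" where
  "vangle v1 v2 = arccos (v1 \<bullet> v2)"

definition hclass :: "real \<Rightarrow> 'a::real_inner \<Rightarrow> 'a \<Rightarrow> bool" where
  "hclass c v x \<longleftrightarrow> v \<bullet> x \<ge> 1 / c"

definition best_response :: "real \<Rightarrow> 'a::real_inner \<Rightarrow> 'a \<Rightarrow> 'a" where
  "best_response c v z =
     (if \<exists>x. hclass c v x \<and> c * norm (x - z) \<le> 1
      then (SOME x. hclass c v x \<and> (\<forall>x'. hclass c v x' \<longrightarrow> norm (x - z) \<le> norm (x' - z)))
      else z)"

text \<open>Error of the strategic classifier h_v under a joint distribution M of (z, y);
  label True stands for +1, False for -1.\<close>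
definition strat_err :: "('a::{real_inner,topological_space} \<times> bool) measure \<Rightarrow> real \<Rightarrow> 'a \<Rightarrow> real" where
  "strat_err M c v =
     measure M {p \<in> space M. hclass c v (best_response c v (fst p)) \<noteq> snd p}"

end

theory Submission
  imports Defs "HOL-Analysis.Analysis"
begin

typedef ('a::finite) idx = "{..<CARD('a)}"
  by (rule exI[of _ 0]) simp

instantiation idx :: (finite) linorder
begin
definition less_eq_idx :: "'a idx \<Rightarrow> 'a idx \<Rightarrow> bool" where "less_eq_idx x y \<longleftrightarrow> Rep_idx x \<le> Rep_idx y"
definition less_idx :: "'a idx \<Rightarrow> 'a idx \<Rightarrow> bool" where "less_idx x y \<longleftrightarrow> Rep_idx x < Rep_idx y"
instance by standard (auto simp: less_eq_idx_def less_idx_def Rep_idx_inject)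
end

instance idx :: (finite) finite
proof
  have "(UNIV :: 'a idx set) = Abs_idx ` {..<CARD('a)}"
    by (metis (mono_tags) type_definition.Abs_image type_definition_idx)
  then show "finite (UNIV :: 'a idx set)" by (metis finite_imageI finite_lessThan)
qed

instance idx :: (finite) wellorder
proof
  fix P :: "'a idx \<Rightarrow> bool" and a
  assume H: "\<And>x. (\<And>y. y < x \<Longrightarrow> P y) \<Longrightarrow> P x"
  have "\<forall>x. Rep_idx x = n \<longrightarrow> P x" for n
  proof (induction n rule: less_induct)
    case (less n)
    then show ?case using H by (auto simp: less_idx_def)
  qed
  then show "P a" by blast
qed

lemma card_idx: "CARD('a::finite idx) = CARD('a)"
proof -
  have "(UNIV :: 'a idx set) = Abs_idx ` {..<CARD('a)}"
    by (metis (mono_tags) type_definition.Abs_image type_definition_idx)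
  moreover have "inj_on (Abs_idx :: nat \<Rightarrow> 'a idx) {..<CARD('a)}"
    by (metis Abs_idx_inverse inj_onI)
  ultimately show ?thesis by (metis card_image card_lessThan)
qed

lemma ex_bij_idx: "\<exists>g :: 'a::finite \<Rightarrow> 'a idx. bij g"
  using finite_same_card_bij[of "UNIV :: 'a set" "UNIV :: 'a idx set"] card_idx[where 'a='a]
  by (auto simp: bij_betw_def)

definition vperm :: "('a::finite \<Rightarrow> 'b::finite) \<Rightarrow> real^'a \<Rightarrow> real^'b" where
  "vperm g x = (\<chi> j. x $ inv g j)"

lemma vperm_comp: "vperm g x $ j = x $ inv g j"
  by (simp add: vperm_def)

lemma vperm_inner:
  assumes "bij g" shows "vperm g x \<bullet> vperm g y = x \<bullet> y"
proof -
  have b: "bij (inv g)" using assms bij_imp_bij_inv by blast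
  have "vperm g x \<bullet> vperm g y = (\<Sum>j\<in>UNIV. x $ inv g j * y $ inv g j)"
    by (simp add: inner_vec_def vperm_def)
  also have "\<dots> = (\<Sum>i\<in>UNIV. x $ i * y $ i)"
    using sum.reindex_bij_betw[of "inv g" UNIV UNIV "\<lambda>i. x $ i * y $ i"] b
    by (simp add: bij_betw_def)
  finally show ?thesis by (simp add: inner_vec_def)
qed

lemma vperm_norm: "bij g \<Longrightarrow> norm (vperm g x) = norm x"
  by (simp add: norm_eq_sqrt_inner vperm_inner)

lemma vperm_linear: "linear (vperm g)"
  by (rule linearI) (auto simp: vperm_def vec_eq_iff)

lemma vperm_meas: "vperm g \<in> borel_measurable borel"
  by (intro borel_measurable_continuous_onI linear_continuous_on) (simp add: linear_conv_bounded_linear[symmetric] vperm_linear)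

lemma prod_Basis_cart:
  fixes l u :: "real^'n"
  assumes "\<And>b. b \<in> Basis \<Longrightarrow> l \<bullet> b \<le> u \<bullet> b"
  shows "(\<Prod>b\<in>Basis. (u - l) \<bullet> b) = (\<Prod>i\<in>UNIV. u $ i - l $ i)"
proof -
  have "cbox l u \<noteq> {}" using assms by (simp add: box_ne_empty)
  then show ?thesis using content_cbox_cart[of l u] content_cbox[of l u] assms
    by (simp add: inner_diff_left)
qed

lemma distr_vperm:
  assumes g: "bij (g :: 'a::finite \<Rightarrow> 'b::finite)"
  shows "distr lborel borel (vperm g) = lborel"
proof (rule lborel_eqI[symmetric])
  show "sets (distr lborel borel (vperm g)) = sets borel" by simp
  fix l u :: "real^'b"
  assume lu: "\<And>b. b \<in> Basis \<Longrightarrow> l \<bullet> b \<le> u \<bullet> b"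
  then have lu': "\<And>j. l $ j \<le> u $ j"
    by (metis cart_eq_inner_axis axis_in_Basis_iff  Basis_real_def insertI1)
  define l' where "l' = (\<chi> i. l $ g i)"
  define u' where "u' = (\<chi> i. u $ g i)"
  have pre: "vperm g -` box l u = box l' u'"
  proof -
    have "(\<forall>j. l $ j < x $ inv g j \<and> x $ inv g j < u $ j) \<longleftrightarrow> (\<forall>i. l $ g i < x $ i \<and> x $ i < u $ g i)" for x
      using g by (metis bij_inv_eq_iff)
    then show ?thesis by (auto simp: mem_box_cart vperm_def l'_def u'_def)
  qed
  have lub: "l' \<bullet> b \<le> u' \<bullet> b" if "b \<in> Basis" for b
    using that lu' by (auto simp: Basis_vec_def inner_axis l'_def u'_def)
  have "emeasure (distr lborel borel (vperm g)) (box l u) = emeasure lborel (box l' u')"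
    using pre by (simp add: emeasure_distr vperm_meas)
  also have "\<dots> = (\<Prod>i\<in>UNIV. u' $ i - l' $ i)"
    using lub by (subst emeasure_lborel_box_eq) (simp add: prod_Basis_cart)
  also have "\<dots> = (\<Prod>j\<in>UNIV. u $ j - l $ j)"
    using prod.reindex_bij_betw[of g UNIV UNIV "\<lambda>j. u $ j - l $ j"] g
    by (simp add: bij_betw_def l'_def u'_def)
  also have "\<dots> = (\<Prod>b\<in>Basis. (u - l) \<bullet> b)"
    using prod_Basis_cart[of l u] lu by simp
  finally show "emeasure (distr lborel borel (vperm g)) (box l u) = (\<Prod>b\<in>Basis. (u - l) \<bullet> b)" .
qed

lemma emeasure_vperm:
  assumes g: "bij (g :: 'a::finite \<Rightarrow> 'b::finite)" and B: "B \<in> sets borel"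
  shows "emeasure lborel (vperm g -` B) = emeasure lborel B"
proof -
  have "emeasure lborel B = emeasure (distr lborel borel (vperm g)) B"
    using distr_vperm[OF g] by simp
  also have "\<dots> = emeasure lborel (vperm g -` B)"
    using B by (simp add: emeasure_distr vperm_meas)
  finally show ?thesis by simp
qed

lemma measure_vperm:
  assumes g: "bij (g :: 'a::finite \<Rightarrow> 'b::finite)" and B: "B \<in> sets borel"
  shows "measure lborel (vperm g -` B) = measure lborel B"
  using emeasure_vperm[OF assms] by (simp add: measure_def)

lemma cauchy_bound:
  fixes h :: "real \<Rightarrow> real"
  assumes nn: "\<And>x. 0 \<le> x \<Longrightarrow> 0 \<le> h x" and le1: "\<And>x. h x \<le> 1"
    and add: "\<And>a b. 0 \<le> a \<Longrightarrow> 0 \<le> b \<Longrightarrow> a + b < pi \<Longrightarrow> h (a+b) = h a + h b"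
    and comp: "\<And>x. 0 \<le> x \<Longrightarrow> x \<le> pi \<Longrightarrow> h x + h (pi - x) \<le> 1"
    and x: "0 \<le> x" "x < pi"
  shows "h x \<le> x / pi"
proof (rule ccontr)
  assume "\<not> h x \<le> x / pi"
  then have eps: "h x - x / pi > 0" by simp
  have mono: "h a \<le> h b" if "0 \<le> a" "a \<le> b" "b < pi" for a b
    using add[of a "b - a"] nn[of "b - a"] that by simp
  have h0: "h 0 = 0" using add[of 0 0] by simp
  have mult: "h (real k * (pi / real n)) = real k * h (pi / real n)" if "k < n" for k n
    using that
  proof (induction k)
    case 0 then show ?case by (simp add: h0)
  next
    case (Suc k)
    have n: "n > 0" using Suc by simp
    have "real k * (pi / real n) + pi / real n = real (Suc k) * (pi / real n)"
      by (simp add: field_simps add_divide_distrib)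
    moreover have "real (Suc k) * (pi / real n) < pi"
    proof -
      have "real (Suc k) < real n" using Suc by linarith
      then have "real (Suc k) * (pi / real n) < real n * (pi / real n)"
        using n by (intro mult_strict_right_mono) auto
      then show ?thesis using n by simp
    qed
    ultimately have "h (real (Suc k) * (pi / real n)) = h (real k * (pi / real n)) + h (pi / real n)"
      using add[of "real k * (pi / real n)" "pi / real n"] n by simp
    then show ?case using Suc by (simp add: algebra_simps)
  qed
  have nh: "real n * h (pi / real n) \<le> 1" if n: "n > 0" for n
  proof -
    have e: "pi - real (n - 1) * (pi / real n) = pi / real n"
      using n by (simp add: of_nat_diff field_simps)
    have le: "real (n - 1) * (pi / real n) \<le> pi"
      using n by (simp add: of_nat_diff field_simps)
    have "h (real (n - 1) * (pi / real n)) + h (pi / real n) \<le> 1"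
      using comp[of "real (n - 1) * (pi / real n)"] e le by simp
    then show ?thesis using mult[of "n - 1" n] n by (simp add: of_nat_diff algebra_simps)
  qed
  obtain n :: nat where n: "inverse (real (Suc n)) < h x - x / pi"
    using reals_Archimedean[OF eps] by blast
  define N where "N = Suc n"
  have N: "N > 0" "1 / real N < h x - x / pi" using n by (auto simp: N_def field_simps)
  define k where "k = nat \<lfloor>real N * x / pi\<rfloor> + 1"
  have fl: "real N * x / pi < real k" "real k \<le> real N * x / pi + 1"
    using x by (auto simp: k_def) linarith+
  have hk: "real k / real N \<le> x / pi + 1 / real N"
    using fl N by (simp add: field_simps)
  show False
  proof (cases "k < N")
    case True
    have "x < real k * (pi / real N)" using fl N by (simp add: field_simps)
    moreover have "real k * (pi / real N) < pi"
      using True N by (simp add: field_simps)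
    ultimately have "h x \<le> h (real k * (pi / real N))" using mono x by simp
    also have "\<dots> = real k * h (pi / real N)" using mult True by simp
    also have "\<dots> \<le> real k * (1 / real N)"
    proof (rule mult_left_mono)
      show "h (pi / real N) \<le> 1 / real N" using nh[OF N(1)] N by (simp add: field_simps mult.commute)
    qed simp
    also have "\<dots> = real k / real N" by simp
    finally show False using hk N by simp
  next
    case False
    then have "1 \<le> real k / real N" using N by simp
    then show False using hk N(2) le1[of x] by linarith
  qed
qed

abbreviation U :: "(real^'m::finite) measure" where
  "U \<equiv> uniform_measure lborel (cball 0 1)"

lemma cball_pos: "measure lborel (cball (0::real^'m::finite) 1) > 0"
  using content_cball_eq_0_iff[of "0::real^'m" 1]
  by (metis measure_nonneg order_le_less zero_less_one not_le)

lemma cball_e: "emeasure lborel (cball (0::real^'m::finite) 1) \<noteq> 0"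
  "emeasure lborel (cball (0::real^'m::finite) 1) \<noteq> \<infinity>"
  using cball_pos[where 'm='m] emeasure_lborel_cball_finite[of "0::real^'m" 1]
  by (auto simp: measure_def)

lemma U_prob: "prob_space (U :: (real^'m::finite) measure)"
  by (rule prob_space_uniform_measure[OF cball_e])

lemma sets_U[simp]: "sets (U :: (real^'m::finite) measure) = sets borel"
  by simp

lemma measure_U: "B \<in> sets borel \<Longrightarrow> measure (U :: (real^'m::finite) measure) B =
   measure lborel (cball 0 1 \<inter> B) / measure lborel (cball (0::real^'m) 1)"
  by (rule measure_uniform_measure[OF cball_e]) simp

definition DD :: "'a::real_inner \<Rightarrow> 'a \<Rightarrow> 'a set" where
  "DD a b = {z. (0 \<le> a \<bullet> z) \<noteq> (0 \<le> b \<bullet> z)}"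

lemma DD_borel: "DD (a::'a::euclidean_space) b \<in> sets borel"
  unfolding DD_def by measurable

lemma U_orth_inv:
  fixes f :: "real^'k::{finite,wellorder} \<Rightarrow> real^'k::_"
  assumes f: "orthogonal_transformation f" and B: "B \<in> sets borel"
  shows "measure U (f -` B) = measure U B"
proof -
  have lin: "linear f" using f by (simp add: orthogonal_transformation_def)
  have fm: "f \<in> borel_measurable borel"
    by (intro borel_measurable_continuous_onI linear_continuous_on) (simp add: linear_conv_bounded_linear[symmetric] lin)
  have fB: "f -` B \<in> sets borel" using fm B by (simp add: measurable_sets_borel)
  define S where "S = cball 0 1 \<inter> B"
  have Sb: "S \<in> sets borel" using B by (simp add: S_def)
  have cS: "cball 0 1 \<inter> f -` B = f -` S"
    using f by (auto simp: S_def orthogonal_transformation_norm)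
  have fS: "f -` S \<in> sets borel" using fm Sb by (simp add: measurable_sets_borel)
  have bij: "bij f" using f orthogonal_transformation_bij by blast
  have eq: "f -` S = inv f ` S" using bij by (simp add: bij_vimage_eq_inv_image)
  have Sl: "S \<in> lmeasurable"
    by (rule bounded_set_imp_lmeasurable) (use Sb in \<open>auto simp: S_def intro: bounded_subset[OF bounded_cball]\<close>)
  have "measure lborel (f -` S) = measure lebesgue (f -` S)" using fS by simp
  also have "\<dots> = measure lebesgue S"
    unfolding eq by (rule measure_orthogonal_image[OF orthogonal_transformation_inv[OF f] Sl])
  also have "\<dots> = measure lborel S" using Sb by simp
  finally show ?thesis using measure_U[OF fB] measure_U[OF B] cS by (simp add: S_def)
qed

definition rot :: "'a::real_inner \<Rightarrow> 'a \<Rightarrow> real \<Rightarrow> 'a \<Rightarrow> 'a" where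
  "rot e1 e2 t z = z + ((cos t - 1) * (e1 \<bullet> z) - sin t * (e2 \<bullet> z)) *\<^sub>R e1
      + (sin t * (e1 \<bullet> z) + (cos t - 1) * (e2 \<bullet> z)) *\<^sub>R e2"

definition rr :: "'a::real_inner \<Rightarrow> 'a \<Rightarrow> real \<Rightarrow> 'a" where
  "rr e1 e2 p = cos p *\<^sub>R e1 + sin p *\<^sub>R e2"

locale onb =
  fixes e1 e2 :: "'a::real_inner"
  assumes n1: "e1 \<bullet> e1 = 1" and n2: "e2 \<bullet> e2 = 1" and o12: "e1 \<bullet> e2 = 0"
begin

lemma o21: "e2 \<bullet> e1 = 0" using o12 by (simp add: inner_commute)

lemma rot_adj: "rot e1 e2 t a \<bullet> z = a \<bullet> rot e1 e2 (-t) z"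
  by (simp add: rot_def inner_add_left inner_add_right algebra_simps inner_commute)

lemma rot_e1: "e1 \<bullet> rot e1 e2 t z = cos t * (e1 \<bullet> z) - sin t * (e2 \<bullet> z)"
  by (simp add: rot_def inner_add_right n1 o12 algebra_simps)

lemma rot_e2: "e2 \<bullet> rot e1 e2 t z = sin t * (e1 \<bullet> z) + cos t * (e2 \<bullet> z)"
  by (simp add: rot_def inner_add_right n2 o21 algebra_simps)

lemma rot_inv: "rot e1 e2 (-t) (rot e1 e2 t z) = z"
proof -
  have sc: "sin t * sin t + cos t * cos t = 1" using sin_cos_squared_add[of t] by (simp add: power2_eq_square)
  have c1: "(cos t - 1) * (e1 \<bullet> z) - sin t * (e2 \<bullet> z) +
      ((cos t - 1) * (cos t * (e1 \<bullet> z) - sin t * (e2 \<bullet> z)) + sin t * (sin t * (e1 \<bullet> z) + cos t * (e2 \<bullet> z))) = 0"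
    using sc by algebra
  have c2: "sin t * (e1 \<bullet> z) + (cos t - 1) * (e2 \<bullet> z) +
      (- sin t * (cos t * (e1 \<bullet> z) - sin t * (e2 \<bullet> z)) + (cos t - 1) * (sin t * (e1 \<bullet> z) + cos t * (e2 \<bullet> z))) = 0"
    using sc by algebra
  have "rot e1 e2 (-t) (rot e1 e2 t z) = z +
     ((cos t - 1) * (e1 \<bullet> z) - sin t * (e2 \<bullet> z) +
      ((cos t - 1) * (cos t * (e1 \<bullet> z) - sin t * (e2 \<bullet> z)) + sin t * (sin t * (e1 \<bullet> z) + cos t * (e2 \<bullet> z)))) *\<^sub>R e1
     + (sin t * (e1 \<bullet> z) + (cos t - 1) * (e2 \<bullet> z) +
      (- sin t * (cos t * (e1 \<bullet> z) - sin t * (e2 \<bullet> z)) + (cos t - 1) * (sin t * (e1 \<bullet> z) + cos t * (e2 \<bullet> z)))) *\<^sub>R e2"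
    apply (subst (1) rot_def)
    apply (simp only: rot_e1 rot_e2)
    apply (simp add: rot_def scaleR_add_left algebra_simps)
    done
  then show ?thesis using c1 c2 by simp
qed

lemma rot_linear: "linear (rot e1 e2 t)"
  by (rule linearI) (simp_all add: rot_def inner_add_right algebra_simps scaleR_add_left)

lemma rot_orth: "orthogonal_transformation (rot e1 e2 t)"
  unfolding orthogonal_transformation_def
  using rot_linear rot_adj rot_inv by simp

lemma rot_rr: "rot e1 e2 t (rr e1 e2 p) = rr e1 e2 (p + t)"
proof -
  have "e1 \<bullet> rr e1 e2 p = cos p" "e2 \<bullet> rr e1 e2 p = sin p"
    by (simp_all add: rr_def inner_add_right n1 n2 o12 o21)
  then show ?thesis
    by (simp add: rot_def rr_def cos_add sin_add algebra_simps scaleR_add_left scaleR_diff_left)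
qed

lemma DD_rot: "DD (rot e1 e2 t a) (rot e1 e2 t b) = rot e1 e2 (-t) -` DD a b"
  by (auto simp: DD_def rot_adj)

lemma rr_inner: "rr e1 e2 p \<bullet> z = cos p * (e1 \<bullet> z) + sin p * (e2 \<bullet> z)"
  by (simp add: rr_def inner_add_left)

end

lemma key_add:
  fixes a b X Y :: real
  assumes a: "0 \<le> a" and b: "0 \<le> b" and ab: "a + b < pi" "0 < a + b"
    and eq: "(0 \<le> X) = (0 \<le> cos (a+b) * X + sin (a+b) * Y)"
  shows "(0 \<le> cos a * X + sin a * Y) = (0 \<le> X)"
proof -
  have sc: "sin a * sin a + cos a * cos a = 1" using sin_cos_squared_add[of a] by (simp add: power2_eq_square)
  have id: "sin (a+b) * (cos a * X + sin a * Y) = sin b * X + sin a * (cos (a+b) * X + sin (a+b) * Y)"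
    unfolding sin_add cos_add using sc by algebra
  have s: "sin (a+b) > 0" using ab by (intro sin_gt_zero) auto
  have sa: "sin a \<ge> 0" using a ab b by (intro sin_ge_zero) auto
  have sb: "sin b \<ge> 0" using a ab b by (intro sin_ge_zero) auto
  have sp: "sin a > 0 \<or> sin b > 0"
  proof (cases "a = 0")
    case True then show ?thesis using ab by (auto intro!: sin_gt_zero)
  next
    case False then show ?thesis using a ab b by (auto intro!: sin_gt_zero)
  qed
  show ?thesis
  proof (cases "0 \<le> X")
    case True
    then have "0 \<le> cos (a+b) * X + sin (a+b) * Y" using eq by simp
    then have "0 \<le> sin (a+b) * (cos a * X + sin a * Y)" unfolding id using True sa sb by simp
    then show ?thesis using True s by (simp add: zero_le_mult_iff)
  next
    case False
    then have Z: "cos (a+b) * X + sin (a+b) * Y < 0" using eq by simp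
    have "sin b * X + sin a * (cos (a+b) * X + sin (a+b) * Y) < 0"
    proof -
      have "sin b * X \<le> 0" using False sb by (simp add: mult_nonneg_nonpos)
      moreover have "sin a * (cos (a+b) * X + sin (a+b) * Y) \<le> 0" using Z sa by (simp add: mult_nonneg_nonpos)
      moreover have "sin b * X < 0 \<or> sin a * (cos (a+b) * X + sin (a+b) * Y) < 0"
        using sp False Z by (auto simp: mult_pos_neg)
      ultimately show ?thesis by linarith
    qed
    then have "sin (a+b) * (cos a * X + sin a * Y) < 0" unfolding id .
    then have "cos a * X + sin a * Y < 0" using s by (simp add: mult_less_0_iff)
    then show ?thesis using False by simp
  qed
qed

context onb
begin

lemma rr0: "rr e1 e2 0 = e1" by (simp add: rr_def)
lemma rrpi: "rr e1 e2 pi = - e1" by (simp add: rr_def)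

lemma DD_add:
  assumes "0 \<le> a" "0 \<le> b" "a + b < pi"
  shows "DD (rr e1 e2 0) (rr e1 e2 (a+b)) = DD (rr e1 e2 0) (rr e1 e2 a) \<union> DD (rr e1 e2 a) (rr e1 e2 (a+b))"
    and "DD (rr e1 e2 0) (rr e1 e2 a) \<inter> DD (rr e1 e2 a) (rr e1 e2 (a+b)) = {}"
proof -
  have k: "(0 \<le> rr e1 e2 a \<bullet> z) = (0 \<le> rr e1 e2 0 \<bullet> z)"
    if "(0 \<le> rr e1 e2 0 \<bullet> z) = (0 \<le> rr e1 e2 (a+b) \<bullet> z)" for z
  proof (cases "a + b = 0")
    case True then have "a = 0" using assms by simp
    then show ?thesis by simp
  next
    case False
    then show ?thesis using key_add[of a b "e1 \<bullet> z" "e2 \<bullet> z"] that assms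
      by (simp add: rr_inner)
  qed
  show "DD (rr e1 e2 0) (rr e1 e2 (a+b)) = DD (rr e1 e2 0) (rr e1 e2 a) \<union> DD (rr e1 e2 a) (rr e1 e2 (a+b))"
    using k by (auto simp: DD_def)
  show "DD (rr e1 e2 0) (rr e1 e2 a) \<inter> DD (rr e1 e2 a) (rr e1 e2 (a+b)) = {}"
    using k by (auto simp: DD_def)
qed

lemma DD_comp:
  "DD (rr e1 e2 0) (rr e1 e2 x) \<inter> DD (rr e1 e2 x) (rr e1 e2 pi) \<subseteq> {z. e1 \<bullet> z = 0}"
  by (auto simp: DD_def rr0 rrpi)

end

lemma e1_ne0: "onb e1 e2 \<Longrightarrow> e1 \<noteq> 0"
  by (auto simp: onb_def)

lemma hyper_null:
  fixes e :: "real^'m::finite"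
  assumes "e \<noteq> 0"
  shows "measure U {z. e \<bullet> z = 0} = 0"
proof -
  have Hb: "{z. e \<bullet> z = 0} \<in> sets borel" by measurable
  have "negligible (cball 0 1 \<inter> {z. e \<bullet> z = 0})"
    by (rule negligible_subset[OF negligible_hyperplane[of e 0]]) (use assms in auto)
  then have "cball 0 1 \<inter> {z. e \<bullet> z = 0} \<in> null_sets lebesgue"
    using negligible_iff_null_sets by blast
  then have "measure lebesgue (cball 0 1 \<inter> {z. e \<bullet> z = 0}) = 0"
    by (simp add: measure_eq_0_null_sets)
  then have "measure lborel (cball 0 1 \<inter> {z. e \<bullet> z = 0}) = 0"
    using Hb by simp
  then show ?thesis using measure_U[OF Hb] by simp
qed

lemma H_shift:
  fixes e1 e2 :: "real^'k::{finite,wellorder}"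
  assumes "onb e1 e2"
  shows "measure U (DD (rr e1 e2 (a+t)) (rr e1 e2 (b+t))) = measure U (DD (rr e1 e2 a) (rr e1 e2 b))"
proof -
  interpret onb e1 e2 by fact
  have "DD (rr e1 e2 (a+t)) (rr e1 e2 (b+t)) = rot e1 e2 (-t) -` DD (rr e1 e2 a) (rr e1 e2 b)"
    by (simp add: rot_rr[symmetric] DD_rot)
  then show ?thesis using U_orth_inv[OF rot_orth DD_borel] by simp
qed

lemma core_onb:
  fixes e1 e2 :: "real^'k::{finite,wellorder}"
  assumes onb: "onb e1 e2" and x: "0 \<le> x" "x < pi"
  shows "measure U (DD e1 (rr e1 e2 x)) \<le> x / pi"
proof -
  interpret onb e1 e2 by fact
  interpret P: prob_space "U :: (real^'k::{finite,wellorder}) measure" by (rule U_prob)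
  define h where "h y = measure U (DD (rr e1 e2 0) (rr e1 e2 y))" for y
  have hsh: "measure U (DD (rr e1 e2 a) (rr e1 e2 (a+b))) = h b" for a b
    using H_shift[OF onb, of 0 a b] by (simp add: h_def add.commute)
  have "h x \<le> x / pi"
  proof (rule cauchy_bound[of h])
    show "0 \<le> h y" for y by (simp add: h_def)
    show "h y \<le> 1" for y by (simp add: h_def)
    show "h (a + b) = h a + h b" if "0 \<le> a" "0 \<le> b" "a + b < pi" for a b
    proof -
      have "h (a+b) = measure U (DD (rr e1 e2 0) (rr e1 e2 a) \<union> DD (rr e1 e2 a) (rr e1 e2 (a+b)))"
        unfolding h_def using DD_add(1)[OF that] by simp
      also have "\<dots> = h a + measure U (DD (rr e1 e2 a) (rr e1 e2 (a+b)))"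
        unfolding h_def using DD_add(2)[OF that]
        by (intro P.finite_measure_Union) (auto simp: DD_borel)
      finally show ?thesis using hsh by simp
    qed
    show "h y + h (pi - y) \<le> 1" if "0 \<le> y" "y \<le> pi" for y
    proof -
      let ?A = "DD (rr e1 e2 0) (rr e1 e2 y)" and ?B = "DD (rr e1 e2 y) (rr e1 e2 pi)"
      have hB: "h (pi - y) = measure U ?B" using hsh[of y "pi - y"] by simp
      have "measure U (?A \<inter> ?B) \<le> measure U {z. e1 \<bullet> z = 0}"
        by (intro P.finite_measure_mono DD_comp) measurable
      also have "\<dots> = 0" by (rule hyper_null[OF e1_ne0[OF onb]])
      finally have "measure U (?A \<inter> ?B) \<le> 0" .
      moreover have "measure U (?A \<union> ?B) = measure U ?A + measure U ?B - measure U (?A \<inter> ?B)"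
        by (intro measure_Un3) (auto simp: DD_borel P.fmeasurable_eq_sets)
      moreover have "measure U (?A \<union> ?B) \<le> 1" by simp
      ultimately show ?thesis using hB by (simp add: h_def)
    qed
  qed (use x in auto)
  then show ?thesis by (simp add: h_def rr0)
qed

lemma core_wo:
  fixes v1 v2 :: "real^'k::{finite,wellorder}"
  assumes n1: "norm v1 = 1" and n2: "norm v2 = 1"
  shows "measure U (DD v1 v2) \<le> arccos (v1 \<bullet> v2) / pi"
proof -
  interpret P: prob_space "U :: (real^'k::{finite,wellorder}) measure" by (rule U_prob)
  define c where "c = v1 \<bullet> v2"
  have i1: "v1 \<bullet> v1 = 1" "v2 \<bullet> v2 = 1" using n1 n2 by (simp_all add: dot_square_norm)
  have cb: "\<bar>c\<bar> \<le> 1" using Cauchy_Schwarz_ineq2[of v1 v2] n1 n2 by (simp add: c_def)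
  define w where "w = v2 - c *\<^sub>R v1"
  have ww: "w \<bullet> w = 1 - c^2"
    by (simp add: w_def inner_diff_left inner_diff_right i1 c_def inner_commute power2_eq_square)
  have v1w: "v1 \<bullet> w = 0" by (simp add: w_def inner_diff_right i1 c_def)
  show ?thesis
  proof (cases "c = 1 \<or> c = -1")
    case True
    then show ?thesis
    proof
      assume c1: "c = 1"
      have "(v2 - v1) \<bullet> (v2 - v1) = 0" using c1 i1 by (simp add: inner_diff_left inner_diff_right c_def inner_commute)
      then have "v2 = v1" by simp
      then show ?thesis by (simp add: DD_def i1)
    next
      assume "c = -1"
      then show ?thesis by (simp add: c_def[symmetric])
    qed
  next
    case False
    then have c: "-1 < c" "c < 1" using cb by auto
    have "c^2 < 1" using c by (simp add: abs_square_less_1)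
    then have wpos: "w \<bullet> w > 0" using ww by simp
    define nw where "nw = norm w"
    have nw: "nw = sqrt (1 - c^2)" using ww by (simp add: nw_def norm_eq_sqrt_inner)
    have nwp: "nw > 0" using wpos by (simp add: nw_def)
    define e2 where "e2 = (1 / nw) *\<^sub>R w"
    have onb: "onb v1 e2"
    proof
      show "v1 \<bullet> v1 = 1" by (rule i1(1))
      show "e2 \<bullet> e2 = 1" using nwp by (simp add: e2_def nw_def dot_square_norm power2_eq_square)
      show "v1 \<bullet> e2 = 0" by (simp add: e2_def v1w)
    qed
    define th where "th = arccos c"
    have th: "0 < th" "th < pi" using arccos_lt_bounded[OF c] by (auto simp: th_def)
    have "cos th = c" using c by (simp add: th_def)
    moreover have "sin th = nw" using c by (simp add: th_def sin_arccos nw)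
    ultimately have "rr v1 e2 th = v2" using nwp by (simp add: rr_def e2_def w_def)
    then show ?thesis using core_onb[OF onb, of th] th by (simp add: th_def c_def)
  qed
qed

lemma measure_U_vperm:
  fixes g :: "'a::finite \<Rightarrow> 'b::finite"
  assumes g: "bij g"
  shows "measure U (DD v1 v2) = measure U (DD (vperm g v1) (vperm g v2))"
proof -
  have e1: "vperm g -` (cball 0 1 \<inter> DD (vperm g v1) (vperm g v2)) = cball 0 1 \<inter> DD v1 v2"
  proof -
    have "vperm g -` (cball 0 1) = cball 0 1" using g by (auto simp: vperm_norm)
    moreover have "vperm g -` DD (vperm g v1) (vperm g v2) = DD v1 v2"
      using g by (simp add: DD_def vperm_inner vimage_def)
    ultimately show ?thesis by (simp only: vimage_Int)
  qed
  have e2: "vperm g -` cball 0 1 = cball (0::real^'a) 1"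
    using g by (auto simp: vperm_norm)
  have Sb: "cball 0 1 \<inter> DD (vperm g v1) (vperm g v2) \<in> sets borel"
    by (intro sets.Int) (auto simp: DD_borel)
  have "measure lborel (cball 0 1 \<inter> DD v1 v2) = measure lborel (cball 0 1 \<inter> DD (vperm g v1) (vperm g v2))"
    using measure_vperm[OF g Sb] e1 by simp
  moreover have "measure lborel (cball (0::real^'a) 1) = measure lborel (cball (0::real^'b) 1)"
    using measure_vperm[OF g, of "cball 0 1"] e2 by simp
  moreover have "DD v1 v2 \<in> sets borel" "DD (vperm g v1) (vperm g v2) \<in> sets borel" by (simp_all add: DD_borel)
  ultimately show ?thesis by (simp only: measure_U)
qed

lemma core:
  fixes v1 v2 :: "real^'n::finite"
  assumes n1: "norm v1 = 1" and n2: "norm v2 = 1"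
  shows "measure U (DD v1 v2) \<le> arccos (v1 \<bullet> v2) / pi"
proof -
  obtain g :: "'n \<Rightarrow> 'n idx" where g: "bij g" using ex_bij_idx by blast
  have "measure U (DD v1 v2) = measure U (DD (vperm g v1) (vperm g v2))"
    by (rule measure_U_vperm[OF g])
  also have "\<dots> \<le> arccos (vperm g v1 \<bullet> vperm g v2) / pi"
    by (rule core_wo) (use n1 n2 g in \<open>simp_all add: vperm_norm\<close>)
  finally show ?thesis using g by (simp add: vperm_inner)
qed

lemma pred_char:
  fixes v z :: "'a::real_inner"
  assumes c: "c > 0" and nv: "norm v = 1"
  shows "hclass c v (best_response c v z) \<longleftrightarrow> 0 \<le> v \<bullet> z"
proof (cases "0 \<le> v \<bullet> z")
  case True
  define d where "d = max 0 (1 / c - v \<bullet> z)"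
  define x0 where "x0 = z + d *\<^sub>R v"
  have vv: "v \<bullet> v = 1" using nv by (simp add: dot_square_norm)
  have hx0: "hclass c v x0" by (simp add: hclass_def x0_def inner_add_right vv d_def)
  have nx0: "norm (x0 - z) = d" using nv by (simp add: x0_def d_def)
  have cx0: "c * norm (x0 - z) \<le> 1"
  proof (cases "1 / c - v \<bullet> z \<le> 0")
    case True2: True
    then have "d = 0" by (simp add: d_def)
    then show ?thesis using nx0 by simp
  next
    case False
    then have "d = 1 / c - v \<bullet> z" by (simp add: d_def)
    then have "c * d = 1 - c * (v \<bullet> z)" using c by (simp add: right_diff_distrib)
    moreover have "c * (v \<bullet> z) \<ge> 0" using c True by simp
    ultimately show ?thesis using nx0 by simp
  qed
  have minx: "norm (x0 - z) \<le> norm (x' - z)" if "hclass c v x'" for x'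
  proof -
    have "v \<bullet> (x' - z) \<le> norm (x' - z)" using norm_cauchy_schwarz[of v "x' - z"] nv by simp
    moreover have "1 / c - v \<bullet> z \<le> v \<bullet> (x' - z)" using that by (simp add: hclass_def inner_diff_right)
    ultimately show ?thesis using nx0 by (simp add: d_def)
  qed
  have ex: "\<exists>x. hclass c v x \<and> c * norm (x - z) \<le> 1" using hx0 cx0 by blast
  have "hclass c v (SOME x. hclass c v x \<and> (\<forall>x'. hclass c v x' \<longrightarrow> norm (x - z) \<le> norm (x' - z)))"
    using someI_ex[of "\<lambda>x. hclass c v x \<and> (\<forall>x'. hclass c v x' \<longrightarrow> norm (x - z) \<le> norm (x' - z))"] hx0 minx
    by blast
  then show ?thesis using True ex by (simp add: best_response_def)
next
  case False
  have nex: "\<not> (\<exists>x. hclass c v x \<and> c * norm (x - z) \<le> 1)"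
  proof
    assume "\<exists>x. hclass c v x \<and> c * norm (x - z) \<le> 1"
    then obtain x where x: "1 / c \<le> v \<bullet> x" "c * norm (x - z) \<le> 1" by (auto simp: hclass_def)
    have "v \<bullet> (x - z) \<le> norm (x - z)" using norm_cauchy_schwarz[of v "x - z"] nv by simp
    then have "1 / c - v \<bullet> z \<le> norm (x - z)" using x by (simp add: inner_diff_right)
    then have "c * (1 / c - v \<bullet> z) \<le> c * norm (x - z)" using c by (simp add: mult_left_mono)
    then have "1 - c * (v \<bullet> z) \<le> 1" using x c by (simp add: right_diff_distrib)
    then show False using False c mult_pos_neg[of c "v \<bullet> z"] by linarith
  qed
  have "1 / c > 0" using c by simp
  then have "\<not> hclass c v z" using False unfolding hclass_def by linarith
  moreover have "best_response c v z = z" unfolding best_response_def using nex by (rule if_not_P)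
  ultimately show ?thesis using False by simp
qed

lemma set_borel_pred:
  fixes v :: "real^'n::finite"
  shows "{p :: (real^'n) \<times> bool. (0 \<le> v \<bullet> fst p) \<noteq> snd p} \<in> sets borel"
proof -
  have eq: "{p :: (real^'n) \<times> bool. (0 \<le> v \<bullet> fst p) \<noteq> snd p} =
     {x. 0 \<le> v \<bullet> x} \<times> {False} \<union> {x. v \<bullet> x < 0} \<times> {True}"
    by auto
  have a: "{x::real^'n. 0 \<le> v \<bullet> x} \<in> sets borel" "{x::real^'n. v \<bullet> x < 0} \<in> sets borel" by measurable
  have b: "{False} \<in> sets (borel :: bool measure)" "{True} \<in> sets (borel :: bool measure)"
    by (simp_all add: closed_singleton borel_closed)
  show ?thesis unfolding eq
    using a b by (intro sets.Un borel_Times) auto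
qed

theorem mainTheorem4:
  fixes M :: "((real ^ 'n::finite) \<times> bool) measure" and c :: real and v1 v2 :: "real ^ 'n"
  assumes "c > 0"
    and "norm v1 = 1" and "norm v2 = 1"
    and "prob_space M"
    and "sets M = sets borel"
    and "distr M borel fst = uniform_measure lborel (cball 0 1)"
  shows "\<bar>strat_err M c v1 - strat_err M c v2\<bar> \<le> vangle v1 v2 / pi"
proof -
  interpret M: prob_space M by fact
  have sp: "space M = UNIV" using sets_eq_imp_space_eq[OF assms(5)] by simp
  define E where "E v = {p \<in> space M. (0 \<le> v \<bullet> fst p) \<noteq> snd p}" for v :: "real^'n"
  have se: "strat_err M c v = measure M (E v)" if "norm v = 1" for v
    unfolding strat_err_def E_def using pred_char[OF assms(1) that] by simp
  have Em: "E v \<in> sets M" for v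
    using set_borel_pred[of v] assms(5) by (simp add: E_def sp)
  have fm: "fst \<in> measurable M borel"
  proof -
    have "fst \<in> measurable (borel :: ((real^'n) \<times> bool) measure) borel"
      by (intro borel_measurable_continuous_onI continuous_intros)
    then show ?thesis unfolding measurable_cong_sets[OF assms(5) refl] .
  qed
  define F where "F = fst -` DD v1 v2 \<inter> space M"
  have Fm: "F \<in> sets M" using fm DD_borel[of v1 v2] by (simp add: F_def measurable_sets)
  have mF: "measure M F = measure U (DD v1 v2)"
    using measure_distr[OF fm, of "DD v1 v2"] assms(6) DD_borel[of v1 v2] by (simp add: F_def)
  have mF2: "measure M F \<le> vangle v1 v2 / pi"
    using mF core[OF assms(2,3)] by (simp add: vangle_def)
  have sub: "E a \<subseteq> E b \<union> F" if "DD a b = DD v1 v2" for a b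
    using that by (auto simp: E_def F_def DD_def set_eq_iff)
  have le: "measure M (E a) \<le> measure M (E b) + measure M F" if "DD a b = DD v1 v2" for a b
  proof -
    have "measure M (E a) \<le> measure M (E b \<union> F)"
      using sub[OF that] Em Fm by (intro M.finite_measure_mono) auto
    also have "\<dots> \<le> measure M (E b) + measure M F"
      using Em Fm by (intro measure_Un_le) auto
    finally show ?thesis .
  qed
  have "DD v2 v1 = DD v1 v2" by (auto simp: DD_def)
  then have "measure M (E v1) \<le> measure M (E v2) + measure M F" "measure M (E v2) \<le> measure M (E v1) + measure M F"
    using le by auto
  then show ?thesis using se[OF assms(2)] se[OF assms(3)] mF2 by linarith
qed

end
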